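(* Let $f:\mathbb{R}^\ell\times\mathbb{R}^m\to\mathbb{R}^\ell$ be $C^1$, let $\Lambda$ be a parameter shift with limits $\lambda_\pm$, and let $X$ define a stable path with endpoints $X_\pm$. For $r>0$ let $\{x_n^r\}_{n\in\mathbb{Z}}$ be the unique solution of $x_{n+1}=f(x_n,\Lambda(rn))$ with $\lim_{n\to-\infty}x_n^r=X_-$. Then there exists $r_0>0$ such that for every $r\in(0,r_0)$, $\lim_{n\to\infty}x_n^r=X_+$.
   Context: A parameter shift is a $C^1$ function $\Lambda:\mathbb{R}\to\mathbb{R}^m$ with $\lim_{s\to\pm\infty}\Lambda(s)=\lambda_\pm$ and $\lim_{s\to\pm\infty}\Lambda'(s)=0$. A stable path is given by $X:\mathbb{R}\to\mathbb{R}^\ell$ such that: $X(s)$ is a fixed point of $f(\cdot,\Lambda(s))$ for every $s$; $\{(s,X(s))\}$ is a connected curve; the limits $X_\pm=\lim_{s\to\pm\infty}X(s)$ exist and are fixed points of $f(\cdot,\lambda_\pm)$; and the spectral radius of $D_xf(X(s),\Lambda(s))$ is $<1$ for all $s\in\mathbb{R}\cup\{\pm\infty\}$ (with $X(\pm\infty)=X_\pm$, $\Lambda(\pm\infty)=\lambda_\pm$). It is known that for each $r>0$ there is a unique solution with $x_n^r\to X_-$ as $n\to-\infty$. *)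

theory Defs
  imports "HOL-Analysis.Analysis"
begin

definition C1_map :: "('a::euclidean_space \<Rightarrow> 'b::euclidean_space) \<Rightarrow> bool" where
  "C1_map g \<longleftrightarrow> (\<exists>g' :: 'a \<Rightarrow> ('a \<Rightarrow>\<^sub>L 'b).
      (\<forall>z. (g has_derivative blinfun_apply (g' z)) (at z)) \<and> continuous_on UNIV g')"

definition spec_radius :: "real^'n^'n \<Rightarrow> real" where
  "spec_radius A = Max {cmod z | z. det (mat z - (\<chi> i j. complex_of_real (A $ i $ j))) = 0}"

definition Dx :: "((real^'l) \<times> (real^'m) \<Rightarrow> real^'l) \<Rightarrow> real^'l \<Rightarrow> real^'m \<Rightarrow> real^'l^'l" where
  "Dx f x lam = matrix (frechet_derivative (\<lambda>y. f (y, lam)) (at x))"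

definition parameter_shift :: "(real \<Rightarrow> real^'m) \<Rightarrow> real^'m \<Rightarrow> real^'m \<Rightarrow> bool" where
  "parameter_shift \<Lambda> lm lp \<longleftrightarrow>
     (\<exists>\<Lambda>'. (\<forall>s. (\<Lambda> has_vector_derivative \<Lambda>' s) (at s)) \<and> continuous_on UNIV \<Lambda>' \<and>
        (\<Lambda> \<longlongrightarrow> lm) at_bot \<and> (\<Lambda> \<longlongrightarrow> lp) at_top \<and>
        (\<Lambda>' \<longlongrightarrow> 0) at_bot \<and> (\<Lambda>' \<longlongrightarrow> 0) at_top)"

definition stable_path ::
  "((real^'l) \<times> (real^'m) \<Rightarrow> real^'l) \<Rightarrow> (real \<Rightarrow> real^'m) \<Rightarrow> real^'m \<Rightarrow> real^'m \<Rightarrow>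
   (real \<Rightarrow> real^'l) \<Rightarrow> real^'l \<Rightarrow> real^'l \<Rightarrow> bool" where
  "stable_path f \<Lambda> lm lp X Xm Xp \<longleftrightarrow>
     (\<forall>s. f (X s, \<Lambda> s) = X s) \<and>
     connected (range (\<lambda>s. (s, X s))) \<and>
     (X \<longlongrightarrow> Xm) at_bot \<and> (X \<longlongrightarrow> Xp) at_top \<and>
     f (Xm, lm) = Xm \<and> f (Xp, lp) = Xp \<and>
     (\<forall>s. spec_radius (Dx f (X s) (\<Lambda> s)) < 1) \<and>
     spec_radius (Dx f Xm lm) < 1 \<and> spec_radius (Dx f Xp lp) < 1"

end

theory Submission
  imports Defs "Jordan_Normal_Form.Spectral_Radius"
begin

no_notation Matrix.vec_index (infixl "$" 100)
no_notation Matrix.scalar_prod (infix "\<bullet>" 70)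

definition enum_n :: "nat \<Rightarrow> 'n::finite" where
  "enum_n = (SOME h. bij_betw h {0..<CARD('n)} UNIV)"

lemma enum_n_bij: "bij_betw (enum_n :: nat \<Rightarrow> 'n::finite) {0..<CARD('n)} UNIV"
proof -
  have "\<exists>h. bij_betw h {0..<CARD('n)} (UNIV :: 'n set)"
    using ex_bij_betw_nat_finite[of "UNIV :: 'n set"] by simp
  then show ?thesis unfolding enum_n_def by (rule someI_ex)
qed

definition idx_n :: "'n::finite \<Rightarrow> nat" where
  "idx_n = the_inv_into {0..<CARD('n)} enum_n"

lemma idx_n_lt: "idx_n (k::'n::finite) < CARD('n)"
proof -
  have "bij_betw (idx_n :: 'n \<Rightarrow> nat) UNIV {0..<CARD('n)}"
    unfolding idx_n_def by (rule bij_betw_the_inv_into[OF enum_n_bij])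
  then show ?thesis using bij_betw_apply by fastforce
qed

lemma enum_idx[simp]: "enum_n (idx_n (k::'n::finite)) = k"
  unfolding idx_n_def by (rule f_the_inv_into_f_bij_betw[OF enum_n_bij]) simp

lemma idx_enum[simp]: "i < CARD('n) \<Longrightarrow> idx_n (enum_n i :: 'n::finite) = i"
  unfolding idx_n_def
  by (rule the_inv_into_f_f[OF bij_betw_imp_inj_on[OF enum_n_bij]]) simp

lemma sum_enum: "(\<Sum>l\<in>{0..<CARD('n)}. g (enum_n l :: 'n::finite)) = (\<Sum>k\<in>UNIV. g k)"
  using sum.reindex_bij_betw[OF enum_n_bij, of g] by simp

definition toJ :: "'a::comm_ring_1^'n::finite^'n \<Rightarrow> 'a mat" where
  "toJ C = Matrix.mat CARD('n) CARD('n) (\<lambda>(i,j). C $ enum_n i $ enum_n j)"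

lemma toJ_carrier: "toJ (C::'a::comm_ring_1^'n::finite^'n) \<in> carrier_mat CARD('n) CARD('n)"
  unfolding toJ_def by simp

lemma toJ_mult: "toJ ((C::'a::comm_ring_1^'n::finite^'n) ** D) = toJ C * toJ D"
  apply (rule eq_matI)
  apply (simp_all add: toJ_def matrix_matrix_mult_def)
  apply (simp add: scalar_prod_def)
  subgoal for i j using sum_enum[of "\<lambda>k. C $ enum_n i $ k * D $ k $ enum_n j"] by simp
  done

primrec cpow :: "'a::comm_ring_1^'n::finite^'n \<Rightarrow> nat \<Rightarrow> 'a^'n^'n" where
  "cpow C 0 = Finite_Cartesian_Product.mat 1"
| "cpow C (Suc k) = cpow C k ** C"

lemma toJ_pow: "toJ (cpow (C::'a::comm_ring_1^'n::finite^'n) k) = toJ C ^\<^sub>m k"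
proof (induction k)
  case 0
  show ?case apply (rule eq_matI) apply (simp_all add: toJ_def Finite_Cartesian_Product.mat_def)
    apply (intro impI) apply (drule arg_cong[where f=idx_n]) by simp
next
  case (Suc k)
  then show ?case by (simp add: toJ_mult)
qed


definition toJv :: "'a::comm_ring_1^'n::finite \<Rightarrow> 'a Matrix.vec" where
  "toJv w = Matrix.vec CARD('n) (\<lambda>i. w $ enum_n i)"

definition fromJv :: "'a::comm_ring_1 Matrix.vec \<Rightarrow> 'a^'n::finite" where
  "fromJv v = (\<chi> k. Matrix.vec_index v (idx_n k))"

lemma toJv_carrier: "toJv (w::'a::comm_ring_1^'n::finite) \<in> carrier_vec CARD('n)"
  unfolding toJv_def by simp

lemma toJv_fromJv: "v \<in> carrier_vec CARD('n) \<Longrightarrow> toJv (fromJv v :: 'a::comm_ring_1^'n::finite) = v"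
  unfolding toJv_def fromJv_def by (intro eq_vecI) auto

lemma toJv_inj: "toJv (w::'a::comm_ring_1^'n::finite) = toJv u \<Longrightarrow> w = u"
proof -
  assume "toJv w = toJv u"
  then have "\<And>i. i < CARD('n) \<Longrightarrow> w $ enum_n i = u $ enum_n i"
    unfolding toJv_def by (metis index_vec)
  then have "\<And>k. w $ k = u $ k" by (metis enum_idx idx_n_lt)
  then show "w = u" by (simp add: Finite_Cartesian_Product.vec_eq_iff)
qed

lemma toJv_mult: "toJ (C::'a::comm_ring_1^'n::finite^'n) *\<^sub>v toJv w = toJv (C *v w)"
  apply (rule eq_vecI)
  apply (simp_all add: toJ_def toJv_def matrix_vector_mult_def scalar_prod_def)
  subgoal for i using sum_enum[of "\<lambda>k. C $ enum_n i $ k * w $ k"] by simp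
  done

lemma toJv_smult: "toJv (c *s (w::'a::comm_ring_1^'n::finite)) = c \<cdot>\<^sub>v toJv w"
  unfolding toJv_def by (intro eq_vecI) auto

lemma toJv_zero: "toJv (0::'a::comm_ring_1^'n::finite) = 0\<^sub>v CARD('n)"
  unfolding toJv_def by (intro eq_vecI) auto

lemma det_zero_iff_ker:
  fixes B :: "'a::field^'n::finite^'n"
  shows "Determinants.det B = 0 \<longleftrightarrow> (\<exists>w. w \<noteq> 0 \<and> B *v w = 0)"
  using invertible_det_nz[of B] invertible_left_inverse[of B] matrix_left_invertible_ker[of B]
  by auto

lemma mat_scalar_mult: "Finite_Cartesian_Product.mat z *v (w::'a::comm_ring_1^'n::finite) = z *s w"
  by (simp add: Finite_Cartesian_Product.vec_eq_iff matrix_vector_mult_def Finite_Cartesian_Product.mat_def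
      if_distrib if_distribR cong del: if_weak_cong)

lemma det_char_iff:
  fixes C :: "'a::field^'n::finite^'n"
  shows "Determinants.det (Finite_Cartesian_Product.mat z - C) = 0 \<longleftrightarrow> (\<exists>w. w \<noteq> 0 \<and> C *v w = z *s w)"
proof -
  have "\<And>w. (Finite_Cartesian_Product.mat z - C) *v w = z *s w - C *v w"
    by (simp add: matrix_vector_mult_diff_rdistrib mat_scalar_mult)
  then show ?thesis unfolding det_zero_iff_ker by (metis eq_iff_diff_eq_0)
qed


lemma cpow_of_real:
  "cpow (\<chi> i j. complex_of_real ((A::real^'n::finite^'n) $ i $ j)) k
     = (\<chi> i j. complex_of_real (cpow A k $ i $ j))"
proof (induction k)
  case 0
  show ?case by (simp add: Finite_Cartesian_Product.vec_eq_iff Finite_Cartesian_Product.mat_def)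
next
  case (Suc k)
  show ?case by (simp add: Suc Finite_Cartesian_Product.vec_eq_iff matrix_matrix_mult_def)
qed

lemma cpow_scale:
  "cpow (\<chi> i j. a * (C::'a::comm_ring_1^'n::finite^'n) $ i $ j) k
     = (\<chi> i j. a ^ k * cpow C k $ i $ j)"
proof (induction k)
  case 0
  show ?case by (simp add: Finite_Cartesian_Product.vec_eq_iff Finite_Cartesian_Product.mat_def)
next
  case (Suc k)
  show ?case by (simp add: Suc Finite_Cartesian_Product.vec_eq_iff matrix_matrix_mult_def
      sum_distrib_left mult_ac)
qed

lemma cpow_decay:
  fixes A :: "real^'n::finite^'n"
  assumes sr: "spec_radius A < 1"
  shows "\<exists>c \<rho>. 0 < \<rho> \<and> \<rho> < 1 \<and> (\<forall>k i j. \<bar>cpow A k $ i $ j\<bar> \<le> c * \<rho> ^ k)"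
proof -
  define AC where "AC = (\<chi> i j. complex_of_real (A $ i $ j))"
  define S where "S = {cmod z | z. Determinants.det (Finite_Cartesian_Product.mat z - AC) = 0}"
  have srS: "spec_radius A = Max S" unfolding spec_radius_def S_def AC_def ..
  define \<rho> where "\<rho> = (max (spec_radius A) 0 + 1) / 2"
  have \<rho>: "0 < \<rho>" "\<rho> < 1" "spec_radius A < \<rho>" using sr unfolding \<rho>_def by auto
  define BC where "BC = (\<chi> i j. complex_of_real (1/\<rho>) * AC $ i $ j)"
  define M where "M = toJ BC"
  have Mc: "M \<in> carrier_mat CARD('n) CARD('n)" unfolding M_def by (rule toJ_carrier)
  have BCw: "BC *v w = complex_of_real (1/\<rho>) *s (AC *v w)" for w
    by (simp add: BC_def Finite_Cartesian_Product.vec_eq_iff matrix_vector_mult_def sum_distrib_left mult_ac)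
  have c1: "Determinants.det (Finite_Cartesian_Product.mat (complex_of_real \<rho> * ev) - AC) = 0"
    if ev: "eigenvalue M ev" for ev
  proof -
    from ev obtain v where v: "v \<in> carrier_vec CARD('n)" "v \<noteq> 0\<^sub>v CARD('n)" "M *\<^sub>v v = ev \<cdot>\<^sub>v v"
      unfolding eigenvalue_def eigenvector_def using Mc by auto
    define w :: "complex^'n" where "w = fromJv v"
    have vw: "toJv w = v" unfolding w_def using v(1) by (rule toJv_fromJv)
    have "w \<noteq> 0" using v(2) vw toJv_zero by metis
    have "toJv (BC *v w) = toJv (ev *s w)"
      using v(3) vw toJv_mult[of BC w] toJv_smult[of ev w] unfolding M_def by simp
    then have "BC *v w = ev *s w" by (rule toJv_inj)
    have one: "complex_of_real \<rho> * complex_of_real (1/\<rho>) = 1" using \<rho>(1)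
      by (simp flip: of_real_mult)
    have "AC *v w = complex_of_real \<rho> *s (BC *v w)"
      unfolding BCw vector_smult_assoc one by simp
    then have "AC *v w = (complex_of_real \<rho> * ev) *s w"
      using \<open>BC *v w = ev *s w\<close> by (simp add: vector_smult_assoc)
    then show ?thesis unfolding det_char_iff using \<open>w \<noteq> 0\<close> by blast
  qed
  have c2: "eigenvalue M (z / complex_of_real \<rho>)"
    if z: "Determinants.det (Finite_Cartesian_Product.mat z - AC) = 0" for z
  proof -
    from z obtain w where w: "w \<noteq> 0" "AC *v w = z *s w" unfolding det_char_iff by blast
    have "BC *v w = (z / complex_of_real \<rho>) *s w"
      unfolding BCw w(2) by (simp add: vector_smult_assoc divide_inverse mult.commute)
    then have "M *\<^sub>v toJv w = (z / complex_of_real \<rho>) \<cdot>\<^sub>v toJv w"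
      unfolding M_def toJv_mult using toJv_smult by metis
    moreover have "toJv w \<noteq> 0\<^sub>v CARD('n)" using w(1) toJv_zero toJv_inj by metis
    ultimately show ?thesis unfolding eigenvalue_def eigenvector_def
      using Mc toJv_carrier by auto
  qed
  have finspec: "finite (spectrum M)" using card_finite_spectrum[OF Mc] by simp
  have "S \<subseteq> (\<lambda>ev. cmod (complex_of_real \<rho> * ev)) ` spectrum M"
  proof
    fix a assume "a \<in> S"
    then obtain z where z: "a = cmod z" "Determinants.det (Finite_Cartesian_Product.mat z - AC) = 0"
      unfolding S_def by blast
    have "z = complex_of_real \<rho> * (z / complex_of_real \<rho>)" using \<rho>(1) by simp
    then show "a \<in> (\<lambda>ev. cmod (complex_of_real \<rho> * ev)) ` spectrum M"
      using c2[OF z(2)] z(1) unfolding spectrum_def by (intro image_eqI[of _ _ "z / complex_of_real \<rho>"]) auto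
  qed
  then have finS: "finite S" using finspec finite_surj by blast
  have evlt: "cmod ev < 1" if "ev \<in> spectrum M" for ev
  proof -
    have "cmod (complex_of_real \<rho> * ev) \<in> S"
      using c1[of ev] that unfolding S_def spectrum_def by blast
    then have "cmod (complex_of_real \<rho> * ev) \<le> spec_radius A" unfolding srS using finS by simp
    then have h: "\<rho> * cmod ev \<le> spec_radius A" using \<rho> by (simp add: norm_mult)
    have "\<rho> * cmod ev < \<rho> * 1" using h \<rho>(3) by linarith
    then show ?thesis using \<rho>(1) mult_less_cancel_left_pos by blast
  qed
  have "spectral_radius M \<in> norm ` spectrum M"
    by (rule spectral_radius_mem_max(1)[OF Mc]) simp
  then have "spectral_radius M < 1" using evlt by auto
  from spectral_radius_jnf_norm_bound_less_1_upper_triangular[OF Mc this]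
  obtain c where c: "\<And>k. norm_bound (M ^\<^sub>m k) c" by blast
  have bnd: "cmod (cpow BC k $ i $ j) \<le> c" for k i j
  proof -
    have "M ^\<^sub>m k = toJ (cpow BC k)" unfolding M_def by (simp add: toJ_pow)
    then have "norm_bound (toJ (cpow BC k)) c" using c by metis
    then have "\<forall>a<CARD('n). \<forall>b<CARD('n). cmod (cpow BC k $ enum_n a $ enum_n b) \<le> c"
      unfolding norm_bound_def toJ_def by simp
    from this[rule_format, OF idx_n_lt[of i] idx_n_lt[of j]] show ?thesis by simp
  qed
  have "cpow BC k = (\<chi> i j. complex_of_real (1/\<rho>) ^ k * cpow AC k $ i $ j)" for k
    unfolding BC_def by (rule cpow_scale)
  then have eq: "cpow BC k $ i $ j = complex_of_real ((1/\<rho>) ^ k * cpow A k $ i $ j)" for k i j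
    unfolding AC_def cpow_of_real by simp
  show ?thesis
  proof (intro exI conjI allI)
    fix k i j
    have "\<bar>(1/\<rho>) ^ k * cpow A k $ i $ j\<bar> \<le> c" using bnd[of k i j] unfolding eq norm_of_real .
    then have "(1/\<rho>) ^ k * \<bar>cpow A k $ i $ j\<bar> \<le> c" using \<rho>(1) by (simp add: abs_mult)
    then show "\<bar>cpow A k $ i $ j\<bar> \<le> c * \<rho> ^ k" using \<rho>(1)
      by (simp add: field_simps power_divide)
  qed (use \<rho> in auto)
qed


primrec bpow :: "('a::real_normed_vector \<Rightarrow>\<^sub>L 'a) \<Rightarrow> nat \<Rightarrow> ('a \<Rightarrow>\<^sub>L 'a)" where
  "bpow A 0 = id_blinfun"
| "bpow A (Suc k) = bpow A k o\<^sub>L A"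

lemma blinfun_compose_assoc': "(a o\<^sub>L b) o\<^sub>L c = a o\<^sub>L (b o\<^sub>L c)"
  by (rule blinfun_eqI) simp

lemma bpow_add: "bpow A (a + b) = bpow A a o\<^sub>L bpow A b"
proof (induction b)
  case 0
  show ?case by (rule blinfun_eqI) simp
next
  case (Suc b)
  then show ?case by (simp add: blinfun_compose_assoc')
qed

lemma norm_bpow_mult: "norm (bpow A (k * m)) \<le> norm (bpow A k) ^ m"
proof (induction m)
  case 0
  show ?case by (simp add: norm_blinfun_id_le)
next
  case (Suc m)
  have "bpow A (k * Suc m) = bpow A (k * m) o\<^sub>L bpow A k"
    by (simp add: bpow_add[symmetric] add.commute)
  then have "norm (bpow A (k * Suc m)) \<le> norm (bpow A (k * m)) * norm (bpow A k)"
    using norm_blinfun_compose by metis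
  also have "\<dots> \<le> norm (bpow A k) ^ m * norm (bpow A k)"
    using Suc by (simp add: mult_right_mono)
  finally show ?case by (simp add: mult.commute)
qed

lemma matrix_bpow:
  "matrix (blinfun_apply (bpow (A::(real^'n::finite) \<Rightarrow>\<^sub>L (real^'n)) k)) = cpow (matrix (blinfun_apply A)) k"
proof (induction k)
  case 0
  have "blinfun_apply (id_blinfun :: (real^'n) \<Rightarrow>\<^sub>L (real^'n)) = id" by (simp add: id_def)
  then show ?case by (simp add: matrix_id_mat_1)
next
  case (Suc k)
  have l: "linear (blinfun_apply B)" for B :: "(real^'n) \<Rightarrow>\<^sub>L (real^'n)"
    by (simp add: blinfun.bounded_linear_right bounded_linear.linear)
  have "blinfun_apply (bpow A (Suc k)) = blinfun_apply (bpow A k) \<circ> blinfun_apply A"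
    by (simp add: blinfun_compose.rep_eq)
  then have "matrix (blinfun_apply (bpow A (Suc k))) = matrix (blinfun_apply (bpow A k)) ** matrix (blinfun_apply A)"
    using matrix_compose[OF l[of A] l[of "bpow A k"]] by simp
  then show ?case using Suc by (simp only: bpow.simps cpow.simps)
qed

lemma norm_bpow_le:
  fixes A :: "(real^'n::finite) \<Rightarrow>\<^sub>L (real^'n)"
  assumes "\<And>i j. \<bar>cpow (matrix (blinfun_apply A)) k $ i $ j\<bar> \<le> B"
  shows "norm (bpow A k) \<le> real CARD('n) * real CARD('n) * B"
proof -
  have bl: "bounded_linear (blinfun_apply (bpow A k))" by (rule blinfun.bounded_linear_right)
  have eq: "(*v) (matrix (blinfun_apply (bpow A k))) = blinfun_apply (bpow A k)"
    using matrix_vector_mul(3)[OF bl] by (simp add: eta_contract_eq)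
  have "onorm ((*v) (matrix (blinfun_apply (bpow A k)))) \<le> real CARD('n) * real CARD('n) * B"
    by (rule onorm_le_matrix_component) (use assms in \<open>simp add: matrix_bpow\<close>)
  then show ?thesis unfolding eq norm_blinfun.rep_eq .
qed

lemma bpow_decay:
  fixes A :: "(real^'n::finite) \<Rightarrow>\<^sub>L (real^'n)"
  assumes "spec_radius (matrix (blinfun_apply A)) < 1"
  shows "\<exists>N>0. norm (bpow A N) < 1/4"
proof -
  obtain c \<rho> where \<rho>: "0 < \<rho>" "\<rho> < 1" and c: "\<And>k i j. \<bar>cpow (matrix (blinfun_apply A)) k $ i $ j\<bar> \<le> c * \<rho> ^ k"
    using cpow_decay[OF assms] by blast
  define C where "C = real CARD('n) * real CARD('n)"
  have "(\<lambda>k. C * (c * \<rho> ^ k)) \<longlonglongrightarrow> C * (c * 0)"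
    using \<rho> by (intro tendsto_intros LIMSEQ_power_zero) auto
  then have "eventually (\<lambda>k. C * (c * \<rho> ^ k) < 1/4) sequentially"
    by (intro order_tendstoD) auto
  then obtain N0 where N0: "\<And>k. k \<ge> N0 \<Longrightarrow> C * (c * \<rho> ^ k) < 1/4"
    unfolding eventually_sequentially by blast
  have "norm (bpow A (Suc N0)) \<le> real CARD('n) * real CARD('n) * (c * \<rho> ^ Suc N0)"
    by (rule norm_bpow_le) (rule c)
  then have "norm (bpow A (Suc N0)) \<le> C * (c * \<rho> ^ Suc N0)" unfolding C_def .
  also have "\<dots> < 1/4" by (rule N0) simp
  finally show ?thesis by (intro exI[of _ "Suc N0"]) simp
qed




lemma dist_pair_le: "dist (a, b) (c, d) \<le> dist a c + dist b d"
  unfolding dist_Pair_Pair using sqrt_sum_squares_le_sum[of "dist a c" "dist b d"] by simp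

lemma graph_conn_lemma:
  fixes X :: "real \<Rightarrow> 'a::metric_space"
  assumes conn: "connected (range (\<lambda>s. (s, X s)))" and d: "d > 0"
    and dich: "\<And>s. \<bar>s - s0\<bar> < \<rho> \<Longrightarrow> dist (X s) (X s0) < d \<or> dist (X s) (X s0) \<ge> 2*d"
    and a: "\<bar>a - s0\<bar> < \<rho>"
  shows "dist (X a) (X s0) < d"
proof (rule ccontr)
  assume "\<not> dist (X a) (X s0) < d"
  then have far: "dist (X a) (X s0) \<ge> 2*d" using dich[OF a] by auto
  define p where "p = X s0"
  define G where "G = range (\<lambda>s. (s, X s))"
  have oc: "open {z::real \<times> 'a. dist (snd z) p < c}" "open {z::real \<times> 'a. dist (snd z) p > c}" for c
    by (auto intro!: open_Collect_less continuous_intros)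
  have ofst: "open {z::real \<times> 'a. fst z < c}" "open {z::real \<times> 'a. fst z > c}" for c
    by (auto intro!: open_Collect_less continuous_intros)
  have "a \<noteq> s0" using far d by (auto simp: p_def)
  then consider "a > s0" | "a < s0" by linarith
  then show False
  proof cases
    case 1
    define U1 where "U1 = {z::real \<times> 'a. fst z < a \<and> dist (snd z) p < d} \<union> {z. fst z < s0}"
    define U2 where "U2 = {z::real \<times> 'a. fst z > s0 \<and> dist (snd z) p > 3/2*d} \<union> {z. fst z > a}"
    have o1: "open U1" unfolding U1_def
      by (intro open_Un ofst oc open_Collect_conj[of "\<lambda>z. fst z < a"])
    have o2: "open U2" unfolding U2_def
      by (intro open_Un ofst oc) (auto intro!: open_Collect_conj open_Collect_less continuous_intros)
    have cov: "G \<subseteq> U1 \<union> U2"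
    proof
      fix z assume "z \<in> G"
      then obtain s where z: "z = (s, X s)" unfolding G_def by auto
      show "z \<in> U1 \<union> U2"
      proof (cases "s < s0 \<or> s > a")
        case True then show ?thesis unfolding z U1_def U2_def by auto
      next
        case False
        then have "\<bar>s - s0\<bar> < \<rho>" using a 1 by auto
        from dich[OF this] show ?thesis
        proof
          assume h: "dist (X s) (X s0) < d"
          then have "s \<noteq> a" using far d by auto
          then show ?thesis using h False unfolding z U1_def p_def by auto
        next
          assume h: "dist (X s) (X s0) \<ge> 2*d"
          then have "s \<noteq> s0" using d by auto
          then show ?thesis using h False d unfolding z U2_def p_def by auto
        qed
      qed
    qed
    have disj: "U1 \<inter> U2 \<inter> G = {}" unfolding U1_def U2_def G_def using 1 d by auto
    have "(s0, X s0) \<in> U1 \<inter> G" unfolding U1_def G_def p_def using 1 d by auto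
    moreover have "(a, X a) \<in> U2 \<inter> G" unfolding U2_def G_def p_def using 1 d far by auto
    ultimately show False using connectedD[OF conn[folded G_def] o1 o2 disj cov] by blast
  next
    case 2
    define U1 where "U1 = {z::real \<times> 'a. fst z > a \<and> dist (snd z) p < d} \<union> {z. fst z > s0}"
    define U2 where "U2 = {z::real \<times> 'a. fst z < s0 \<and> dist (snd z) p > 3/2*d} \<union> {z. fst z < a}"
    have o1: "open U1" unfolding U1_def
      by (intro open_Un ofst oc) (auto intro!: open_Collect_conj open_Collect_less continuous_intros)
    have o2: "open U2" unfolding U2_def
      by (intro open_Un ofst oc) (auto intro!: open_Collect_conj open_Collect_less continuous_intros)
    have cov: "G \<subseteq> U1 \<union> U2"
    proof
      fix z assume "z \<in> G"
      then obtain s where z: "z = (s, X s)" unfolding G_def by auto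
      show "z \<in> U1 \<union> U2"
      proof (cases "s > s0 \<or> s < a")
        case True then show ?thesis unfolding z U1_def U2_def by auto
      next
        case False
        then have "\<bar>s - s0\<bar> < \<rho>" using a 2 by auto
        from dich[OF this] show ?thesis
        proof
          assume h: "dist (X s) (X s0) < d"
          then have "s \<noteq> a" using far d by auto
          then show ?thesis using h False unfolding z U1_def p_def by auto
        next
          assume h: "dist (X s) (X s0) \<ge> 2*d"
          then have "s \<noteq> s0" using d by auto
          then show ?thesis using h False d unfolding z U2_def p_def by auto
        qed
      qed
    qed
    have disj: "U1 \<inter> U2 \<inter> G = {}" unfolding U1_def U2_def G_def using 2 d by auto
    have "(s0, X s0) \<in> U1 \<inter> G" unfolding U1_def G_def p_def using 2 d by auto
    moreover have "(a, X a) \<in> U2 \<inter> G" unfolding U2_def G_def p_def using 2 d far by auto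
    ultimately show False using connectedD[OF conn[folded G_def] o1 o2 disj cov] by blast
  qed
qed

lemma tanh_lip: "\<bar>tanh s - tanh t\<bar> \<le> \<bar>s - (t::real)\<bar>"
proof -
  have k: "\<bar>tanh b - tanh a\<bar> \<le> b - a" if "a < b" for a b :: real
  proof -
    have d: "(tanh has_real_derivative (1 - tanh x ^ 2)) (at x)" for x :: real
    proof -
      have "((\<lambda>x. tanh x) has_real_derivative (1 - tanh x ^ 2) * 1) (at x)"
        by (rule has_field_derivative_tanh) (simp_all add: DERIV_ident)
      then show ?thesis by simp
    qed
    have "\<exists>z. a < z \<and> z < b \<and> tanh b - tanh a = (b - a) * (1 - tanh z ^ 2)"
      by (rule MVT2) (use that d in auto)
    then obtain z where z: "tanh b - tanh a = (b - a) * (1 - tanh z ^ 2)" by blast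
    have "tanh z ^ 2 < 1" using tanh_real_bounds[of z] by (auto simp: abs_square_less_1)
    moreover have "tanh z ^ 2 \<ge> 0" by simp
    ultimately have "\<bar>1 - tanh z ^ 2\<bar> \<le> 1" by simp
    then have "\<bar>(b - a) * (1 - tanh z ^ 2)\<bar> \<le> (b - a) * 1"
      using that by (simp add: abs_mult mult_left_mono)
    then show ?thesis using z by simp
  qed
  consider "s < t" | "s = t" | "t < s" by linarith
  then show ?thesis
  proof cases
    case 1 then show ?thesis using k[of s t] by (simp add: abs_minus_commute)
  next
    case 3 then show ?thesis using k[of t s] by simp
  qed simp
qed

lemma compactify:
  fixes Y :: "real \<Rightarrow> 'a::metric_space"
  assumes cont: "\<And>s. isCont Y s" and lm: "(Y \<longlongrightarrow> a) at_bot" and lp: "(Y \<longlongrightarrow> b) at_top"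
  shows "compact (range Y \<union> {a, b})"
    and "\<And>\<epsilon>. \<epsilon> > 0 \<Longrightarrow> \<exists>d>0. \<forall>s t. \<bar>s - t\<bar> < d \<longrightarrow> dist (Y s) (Y t) < \<epsilon>"
proof -
  define g where "g t = (if t \<le> -1 then a else if t \<ge> 1 then b else Y (artanh t))" for t :: real
  have gc: "continuous_on {-1..1} g"
  proof (rule continuous_on_IccI)
    have L1: "((\<lambda>t. Y (artanh t)) \<longlongrightarrow> a) (at_right (-1))"
      by (rule filterlim_compose[OF lm artanh_real_at_right_1])
    have E1: "eventually (\<lambda>t. Y (artanh t) = g t) (at_right (-1))"
    proof -
      have "eventually (\<lambda>t. t \<in> {-1<..<1}) (at_right (-1::real))" by (rule eventually_at_right_real) simp
      then show ?thesis by eventually_elim (auto simp: g_def)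
    qed
    have "(g \<longlongrightarrow> a) (at_right (-1))" by (rule tendsto_cong[OF E1, THEN iffD1, OF L1])
    moreover have "g (-1) = a" by (simp add: g_def)
    ultimately show "(g \<longlongrightarrow> g (-1)) (at_right (-1))" by simp
    have L2: "((\<lambda>t. Y (artanh t)) \<longlongrightarrow> b) (at_left 1)"
      by (rule filterlim_compose[OF lp artanh_real_at_left_1])
    have E2: "eventually (\<lambda>t. Y (artanh t) = g t) (at_left 1)"
    proof -
      have "eventually (\<lambda>t. t \<in> {-1<..<1}) (at_left (1::real))" by (rule eventually_at_left_real) simp
      then show ?thesis by eventually_elim (auto simp: g_def)
    qed
    have "(g \<longlongrightarrow> b) (at_left 1)" by (rule tendsto_cong[OF E2, THEN iffD1, OF L2])
    moreover have "g 1 = b" by (simp add: g_def)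
    ultimately show "(g \<longlongrightarrow> g 1) (at_left 1)" by simp
    fix x :: real assume x: "-1 < x" "x < 1"
    have "isCont (\<lambda>t. Y (artanh t)) x"
      by (rule continuous_at_compose[unfolded o_def, OF isCont_artanh[OF x] cont])
    then have "((\<lambda>t. Y (artanh t)) \<longlongrightarrow> g x) (at x)" using x by (simp add: g_def isCont_def)
    then show "(g \<longlongrightarrow> g x) (at x)"
      by (rule Lim_transform_within_open[of _ _ _ _ "{-1<..<1}"]) (use x in \<open>auto simp: g_def\<close>)
  qed simp
  have img: "g ` {-1..1} = range Y \<union> {a, b}"
  proof
    show "g ` {-1..1} \<subseteq> range Y \<union> {a, b}" by (auto simp: g_def)
    have "Y s \<in> g ` {-1..1}" for s
    proof -
      have "tanh s \<in> {-1<..<1}" using tanh_real_bounds[of s] by simp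
      then have "g (tanh s) = Y s" by (simp add: g_def artanh_tanh_real)
      then show "Y s \<in> g ` {-1..1}" using \<open>tanh s \<in> {-1<..<1}\<close> by (intro image_eqI[of _ _ "tanh s"]) auto
    qed
    moreover have "a \<in> g ` {-1..1}" by (rule image_eqI[of _ _ "-1"]) (auto simp: g_def)
    moreover have "b \<in> g ` {-1..1}" by (rule image_eqI[of _ _ "1"]) (auto simp: g_def)
    ultimately show "range Y \<union> {a, b} \<subseteq> g ` {-1..1}" by blast
  qed
  show "compact (range Y \<union> {a, b})" unfolding img[symmetric]
    by (rule compact_continuous_image[OF gc compact_Icc])
  fix \<epsilon> :: real assume \<epsilon>: "\<epsilon> > 0"
  have "uniformly_continuous_on {-1..1} g" by (rule compact_uniformly_continuous[OF gc compact_Icc])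
  then obtain d where d: "d > 0" and H: "\<And>x x'. x \<in> {-1..1} \<Longrightarrow> x' \<in> {-1..1} \<Longrightarrow> dist x' x < d \<Longrightarrow> dist (g x') (g x) < \<epsilon>"
    unfolding uniformly_continuous_on_def using \<epsilon> by blast
  show "\<exists>d>0. \<forall>s t. \<bar>s - t\<bar> < d \<longrightarrow> dist (Y s) (Y t) < \<epsilon>"
  proof (intro exI[of _ d] conjI allI impI)
    fix s t :: real assume st: "\<bar>s - t\<bar> < d"
    have gs: "g (tanh s) = Y s" "g (tanh t) = Y t"
      using tanh_real_bounds[of s] tanh_real_bounds[of t] by (auto simp: g_def artanh_tanh_real)
    have "dist (tanh s) (tanh t) < d" using tanh_lip[of s t] st by (simp add: dist_real_def)
    then have "dist (g (tanh s)) (g (tanh t)) < \<epsilon>"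
      using H[of "tanh t" "tanh s"] tanh_real_bounds[of s] tanh_real_bounds[of t] by auto
    then show "dist (Y s) (Y t) < \<epsilon>" using gs by simp
  qed (rule d)
qed

lemma lebesgue_box:
  fixes K :: "('a::metric_space \<times> 'b::metric_space) set"
  assumes K: "compact K" and d: "\<And>q. q \<in> K \<Longrightarrow> d q > 0"
  shows "\<exists>e>0. \<forall>q'\<in>K. \<exists>q\<in>K. (\<forall>x. dist x (fst q') < e \<longrightarrow> dist x (fst q) < d q) \<and>
                                 (\<forall>\<nu>. dist \<nu> (snd q') < e \<longrightarrow> dist \<nu> (snd q) < d q)"
proof -
  have cov: "K \<subseteq> \<Union> ((\<lambda>q. ball q (d q)) ` K)" using d by fastforce
  obtain e where e: "e > 0" and H: "\<And>x. x \<in> K \<Longrightarrow> \<exists>G \<in> (\<lambda>q. ball q (d q)) ` K. ball x e \<subseteq> G"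
    using Heine_Borel_lemma[OF K cov] by blast
  show ?thesis
  proof (intro exI[of _ e] conjI ballI)
    show "e > 0" by fact
    fix q' assume q': "q' \<in> K"
    then obtain q where q: "q \<in> K" and sub: "ball q' e \<subseteq> ball q (d q)" using H by blast
    show "\<exists>q\<in>K. (\<forall>x. dist x (fst q') < e \<longrightarrow> dist x (fst q) < d q) \<and>
                 (\<forall>\<nu>. dist \<nu> (snd q') < e \<longrightarrow> dist \<nu> (snd q) < d q)"
    proof (intro bexI[OF _ q] conjI allI impI)
      fix x assume "dist x (fst q') < e"
      then have "(x, snd q') \<in> ball q' e"
        by (cases q') (simp add: dist_Pair_Pair dist_commute)
      then have "dist q (x, snd q') < d q" using sub by auto
      then show "dist x (fst q) < d q"
        using dist_fst_le[of q "(x, snd q')"] by (simp add: dist_commute)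
    next
      fix \<nu> assume "dist \<nu> (snd q') < e"
      then have "(fst q', \<nu>) \<in> ball q' e"
        by (cases q') (simp add: dist_Pair_Pair dist_commute)
      then have "dist q (fst q', \<nu>) < d q" using sub by auto
      then show "dist \<nu> (snd q) < d q"
        using dist_snd_le[of q "(fst q', \<nu>)"] by (simp add: dist_commute)
    qed
  qed
qed

lemma seq_lemma:
  fixes D e :: "nat \<Rightarrow> real"
  assumes D0: "\<And>j. D j \<ge> 0" and Db: "\<And>j. D j \<le> B"
    and rec: "\<And>j. D (Suc j) \<le> 1/2 * D j + e j"
    and e: "\<And>\<epsilon>. \<epsilon> > 0 \<Longrightarrow> \<exists>J. \<forall>j\<ge>J. e j < \<epsilon>"
  shows "D \<longlonglongrightarrow> 0"
proof (rule LIMSEQ_I)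
  fix \<epsilon> :: real assume \<epsilon>: "\<epsilon> > 0"
  obtain J where J: "\<And>j. j \<ge> J \<Longrightarrow> e j \<le> \<epsilon>/4" using less_imp_le e[of "\<epsilon>/4"] \<epsilon> by auto
  have ind: "D (J + k) \<le> (1/2)^k * D J + \<epsilon>/2" for k
  proof (induction k)
    case 0
    then show ?case using \<epsilon> by simp
  next
    case (Suc k)
    have "D (J + Suc k) \<le> 1/2 * D (J + k) + e (J + k)" using rec[of "J + k"] by simp
    also have "\<dots> \<le> 1/2 * ((1/2)^k * D J + \<epsilon>/2) + \<epsilon>/4"
      using Suc.IH J[of "J + k", OF le_add1] by (intro add_mono mult_left_mono) auto
    also have "\<dots> = (1/2)^Suc k * D J + \<epsilon>/2" by (simp add: field_simps)
    finally show ?case .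
  qed
  have "(\<lambda>k. (1/2::real)^k * B) \<longlonglongrightarrow> 0 * B"
    by (intro tendsto_intros LIMSEQ_power_zero) auto
  then have "\<forall>r>0. \<exists>no. \<forall>n\<ge>no. \<bar>(1/2::real)^n * B\<bar> < r" unfolding LIMSEQ_def by (simp add: dist_real_def)
  then obtain K where K0: "\<And>k. k \<ge> K \<Longrightarrow> \<bar>(1/2::real)^k * B\<bar> < \<epsilon>/2"
    using \<epsilon> half_gt_zero by blast
  have K: "(1/2::real)^k * B < \<epsilon>/2" if "k \<ge> K" for k using K0[OF that] by linarith
  show "\<exists>no. \<forall>n\<ge>no. norm (D n - 0) < \<epsilon>"
  proof (intro exI[of _ "J + K"] allI impI)
    fix n assume n: "n \<ge> J + K"
    then obtain k where k: "n = J + k" "k \<ge> K" by (metis add_leD1 le_add_diff_inverse nat_add_left_cancel_le)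
    have "(1/2::real)^k * D J \<le> (1/2)^k * B" using Db[of J] by (intro mult_left_mono) auto
    then have "D (J + k) < \<epsilon>" using ind[of k] K[OF k(2)] by linarith
    then have "D n < \<epsilon>" using k(1) by simp
    then show "norm (D n - 0) < \<epsilon>" using D0[of n] by simp
  qed
qed

locale sys =
  fixes f :: "(real^'l) \<times> (real^'m) \<Rightarrow> real^'l"
    and f' :: "(real^'l) \<times> (real^'m) \<Rightarrow> ((real^'l) \<times> (real^'m)) \<Rightarrow>\<^sub>L (real^'l)"
  assumes fder: "\<And>z. (f has_derivative blinfun_apply (f' z)) (at z)"
    and f'cont: "continuous_on UNIV f'"
begin

definition emb :: "(real^'l) \<Rightarrow>\<^sub>L ((real^'l) \<times> (real^'m))" where
  "emb = Blinfun (\<lambda>h. (h, 0))"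

lemma emb_apply: "blinfun_apply emb h = (h, 0)"
proof -
  have "bounded_linear (\<lambda>h::real^'l. (h, 0::real^'m))"
    by (intro bounded_linear_Pair bounded_linear_ident bounded_linear_zero)
  then show ?thesis unfolding emb_def by (simp add: bounded_linear_Blinfun_apply)
qed

definition J where "J z = f' z o\<^sub>L emb"

lemma partial_der: "((\<lambda>y. f (y, \<mu>)) has_derivative blinfun_apply (J (x, \<mu>))) (at x)"
proof -
  have d1: "((\<lambda>y. (y, \<mu>)) has_derivative (\<lambda>h. (h, 0))) (at x)"
    by (auto intro!: derivative_eq_intros)
  have "((\<lambda>y. f (y, \<mu>)) has_derivative (\<lambda>h. blinfun_apply (f' (x, \<mu>)) (h, 0))) (at x)"
    using has_derivative_compose[OF d1 fder[of "(x, \<mu>)"]] by simp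
  moreover have "blinfun_apply (J (x, \<mu>)) = (\<lambda>h. blinfun_apply (f' (x, \<mu>)) (h, 0))"
    unfolding J_def by (auto simp: emb_apply)
  ultimately show ?thesis by simp
qed

lemma isCont_J: "isCont J z"
proof -
  have "isCont f' z" by (rule continuous_on_interior[OF f'cont]) simp
  then show ?thesis unfolding J_def
    by (intro bounded_bilinear.continuous[OF bounded_bilinear_blinfun_compose]) auto
qed

lemma isCont_f: "isCont f z"
  using fder has_derivative_continuous by blast

lemma Dx_eq: "Dx f x \<mu> = matrix (blinfun_apply (J (x, \<mu>)))"
  unfolding Dx_def using frechet_derivative_at[OF partial_der[of \<mu> x]] by simp

primrec itc :: "(real^'m) list \<Rightarrow> real^'l \<Rightarrow> real^'l" where
  "itc [] x = x"
| "itc (\<nu> # \<nu>s) x = itc \<nu>s (f (x, \<nu>))"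

primrec itcD :: "(real^'m) list \<Rightarrow> real^'l \<Rightarrow> (real^'l) \<Rightarrow>\<^sub>L (real^'l)" where
  "itcD [] x = id_blinfun"
| "itcD (\<nu> # \<nu>s) x = itcD \<nu>s (f (x, \<nu>)) o\<^sub>L J (x, \<nu>)"

lemma itc_der: "(itc \<nu>s has_derivative blinfun_apply (itcD \<nu>s x)) (at x)"
proof (induction \<nu>s arbitrary: x)
  case Nil
  show ?case by (simp add: has_derivative_ident[unfolded id_def])
next
  case (Cons \<nu> \<nu>s)
  have "((\<lambda>y. itc \<nu>s (f (y, \<nu>))) has_derivative
        (\<lambda>h. blinfun_apply (itcD \<nu>s (f (x, \<nu>))) (blinfun_apply (J (x, \<nu>)) h))) (at x)"
    by (rule has_derivative_compose[OF partial_der Cons.IH])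
  then show ?case by (simp add: blinfun_compose.rep_eq o_def)
qed

lemma itc_append: "itc (\<nu>s @ [\<nu>]) x = f (itc \<nu>s x, \<nu>)"
  by (induction \<nu>s arbitrary: x) auto


lemma cont_lemma:
  assumes fp: "f (p, \<mu>0) = p"
  shows "\<epsilon> > 0 \<Longrightarrow> \<exists>\<delta>>0. \<forall>\<nu>s x. length \<nu>s = n \<and> (\<forall>\<nu>\<in>set \<nu>s. dist \<nu> \<mu>0 < \<delta>) \<and> dist x p < \<delta> \<longrightarrow>
            dist (itc \<nu>s x) p < \<epsilon> \<and> norm (itcD \<nu>s x - bpow (J (p, \<mu>0)) n) < \<epsilon>"
proof (induction n arbitrary: \<epsilon>)
  case 0
  then show ?case by (intro exI[of _ \<epsilon>]) auto
next
  case (Suc n)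
  define B where "B = J (p, \<mu>0)"
  define P where "P = bpow B n"
  define \<epsilon>1 where "\<epsilon>1 = min \<epsilon> (\<epsilon> / (2 * (norm B + 1)))"
  define \<eta> where "\<eta> = min 1 (\<epsilon> / (2 * (norm P + 1)))"
  have nB: "norm B + 1 > 0" and nP: "norm P + 1 > 0" by (simp_all add: add_nonneg_pos)
  have \<epsilon>1: "\<epsilon>1 > 0" using Suc.prems nB by (auto simp: \<epsilon>1_def)
  have \<eta>: "\<eta> > 0" using Suc.prems nP by (auto simp: \<eta>_def)
  obtain \<delta>1 where \<delta>1: "\<delta>1 > 0" and H1: "\<forall>\<nu>s x. length \<nu>s = n \<and> (\<forall>\<nu>\<in>set \<nu>s. dist \<nu> \<mu>0 < \<delta>1) \<and> dist x p < \<delta>1 \<longrightarrow>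
            dist (itc \<nu>s x) p < \<epsilon>1 \<and> norm (itcD \<nu>s x - P) < \<epsilon>1"
    using Suc.IH[OF \<epsilon>1] unfolding P_def B_def by blast
  obtain \<delta>2 where \<delta>2: "\<delta>2 > 0" and H2: "\<forall>z. dist z (p, \<mu>0) < \<delta>2 \<longrightarrow> dist (f z) p < \<delta>1"
    using isCont_f[of "(p, \<mu>0)"] \<delta>1 unfolding continuous_at_eps_delta fp by blast
  obtain \<delta>3 where \<delta>3: "\<delta>3 > 0" and H3: "\<forall>z. dist z (p, \<mu>0) < \<delta>3 \<longrightarrow> dist (J z) B < \<eta>"
    using isCont_J[of "(p, \<mu>0)"] \<eta> unfolding continuous_at_eps_delta B_def by blast
  define \<delta> where "\<delta> = min \<delta>1 (min \<delta>2 \<delta>3 / 2)"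
  show ?case
  proof (intro exI[of _ \<delta>] conjI allI impI)
    show "\<delta> > 0" using \<delta>1 \<delta>2 \<delta>3 by (simp add: \<delta>_def)
    fix \<nu>s x assume a: "length \<nu>s = Suc n \<and> (\<forall>\<nu>\<in>set \<nu>s. dist \<nu> \<mu>0 < \<delta>) \<and> dist x p < \<delta>"
    then obtain \<nu> rest where \<nu>s: "\<nu>s = \<nu> # rest" by (cases \<nu>s) auto
    have lr: "length rest = n" using a \<nu>s by simp
    have \<nu>d: "dist \<nu> \<mu>0 < \<delta>" using a \<nu>s by simp
    have rd: "\<forall>\<nu>'\<in>set rest. dist \<nu>' \<mu>0 < \<delta>1" using a \<nu>s by (auto simp: \<delta>_def)
    have xd: "dist x p < \<delta>" using a by simp
    have "dist (x, \<nu>) (p, \<mu>0) \<le> dist x p + dist \<nu> \<mu>0" by (rule dist_pair_le)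
    also have "\<dots> < min \<delta>2 \<delta>3" using xd \<nu>d by (simp add: \<delta>_def)
    finally have zd: "dist (x, \<nu>) (p, \<mu>0) < min \<delta>2 \<delta>3" .
    define y where "y = f (x, \<nu>)"
    have yd: "dist y p < \<delta>1" using H2 zd unfolding y_def by simp
    have r1: "dist (itc rest y) p < \<epsilon>1" and r2: "norm (itcD rest y - P) < \<epsilon>1"
      using H1 lr rd yd by blast+
    show "dist (itc \<nu>s x) p < \<epsilon>" using r1 unfolding \<nu>s y_def \<epsilon>1_def by simp
    have Jd: "norm (J (x, \<nu>) - B) < \<eta>" using H3 zd by (simp add: dist_norm)
    have nJ: "norm (J (x, \<nu>)) \<le> norm B + 1"
      using Jd norm_triangle_ineq2[of "J (x, \<nu>)" B] unfolding \<eta>_def by linarith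
    have eq: "itcD \<nu>s x - bpow B (Suc n) = ((itcD rest y - P) o\<^sub>L J (x, \<nu>)) + (P o\<^sub>L (J (x, \<nu>) - B))"
      by (rule blinfun_eqI) (simp add: \<nu>s P_def y_def blinfun.diff_left blinfun.diff_right blinfun.add_left)
    have "norm (itcD \<nu>s x - bpow B (Suc n)) \<le> norm ((itcD rest y - P) o\<^sub>L J (x, \<nu>)) + norm (P o\<^sub>L (J (x, \<nu>) - B))"
      unfolding eq by (rule norm_triangle_ineq)
    also have "\<dots> \<le> norm (itcD rest y - P) * norm (J (x, \<nu>)) + norm P * norm (J (x, \<nu>) - B)"
      by (intro add_mono norm_blinfun_compose)
    also have "\<dots> \<le> \<epsilon>1 * (norm B + 1) + norm P * \<eta>"
      using r2 nJ Jd \<epsilon>1 by (intro add_mono mult_mono mult_left_mono) auto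
    also have "\<dots> < \<epsilon>"
    proof -
      have "\<epsilon>1 \<le> \<epsilon> / (2 * (norm B + 1))" by (simp add: \<epsilon>1_def)
      then have "\<epsilon>1 * (norm B + 1) \<le> \<epsilon> / (2 * (norm B + 1)) * (norm B + 1)"
        using nB by (intro mult_right_mono) auto
      also have "\<dots> = \<epsilon> / 2" using nB by (simp add: field_simps)
      finally have t1: "\<epsilon>1 * (norm B + 1) \<le> \<epsilon> / 2" .
      have "\<eta> \<le> \<epsilon> / (2 * (norm P + 1))" by (simp add: \<eta>_def)
      then have "norm P * \<eta> \<le> norm P * (\<epsilon> / (2 * (norm P + 1)))" by (intro mult_left_mono) auto
      also have "\<dots> < \<epsilon> / 2" using Suc.prems nP by (simp add: field_simps)
      finally show ?thesis using t1 by linarith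
    qed
    finally show "norm (itcD \<nu>s x - bpow (J (p, \<mu>0)) (Suc n)) < \<epsilon>" unfolding B_def .
  qed
qed

lemma local_contr:
  assumes fp: "f (p, \<mu>0) = p" and Nb: "norm (bpow (J (p, \<mu>0)) N) < 1/4"
  shows "\<exists>\<delta>>0. \<forall>\<nu>s. length \<nu>s = N \<and> (\<forall>\<nu>\<in>set \<nu>s. dist \<nu> \<mu>0 < \<delta>) \<longrightarrow>
           (\<forall>x y. dist x p < \<delta> \<and> dist y p < \<delta> \<longrightarrow> dist (itc \<nu>s x) (itc \<nu>s y) \<le> 1/2 * dist x y)"
proof -
  obtain \<delta> where \<delta>: "\<delta> > 0" and H: "\<forall>\<nu>s x. length \<nu>s = N \<and> (\<forall>\<nu>\<in>set \<nu>s. dist \<nu> \<mu>0 < \<delta>) \<and> dist x p < \<delta> \<longrightarrow>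
            dist (itc \<nu>s x) p < 1/4 \<and> norm (itcD \<nu>s x - bpow (J (p, \<mu>0)) N) < 1/4"
    using cont_lemma[OF fp, of "1/4" N] by auto
  show ?thesis
  proof (intro exI[of _ \<delta>] conjI allI impI)
    show "\<delta> > 0" by fact
    fix \<nu>s x y
    assume a: "length \<nu>s = N \<and> (\<forall>\<nu>\<in>set \<nu>s. dist \<nu> \<mu>0 < \<delta>)" and b: "dist x p < \<delta> \<and> dist y p < \<delta>"
    have bound: "onorm (blinfun_apply (itcD \<nu>s z)) \<le> 1/2" if "z \<in> ball p \<delta>" for z
    proof -
      have "dist z p < \<delta>" using that by (simp add: dist_commute)
      then have "norm (itcD \<nu>s z - bpow (J (p, \<mu>0)) N) < 1/4" using H a by blast
      then have "norm (itcD \<nu>s z) < 1/2"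
        using Nb norm_triangle_ineq2[of "itcD \<nu>s z" "bpow (J (p, \<mu>0)) N"] by linarith
      then show ?thesis by (simp add: norm_blinfun.rep_eq[symmetric])
    qed
    have "norm (itc \<nu>s x - itc \<nu>s y) \<le> 1/2 * norm (x - y)"
      by (rule differentiable_bound[OF convex_ball _ bound])
        (use b in \<open>auto intro: has_derivative_at_withinI itc_der simp: dist_commute\<close>)
    then show "dist (itc \<nu>s x) (itc \<nu>s y) \<le> 1/2 * dist x y" by (simp add: dist_norm)
  qed
qed


lemma itc_fixed: "f (x, \<nu>) = x \<Longrightarrow> itc (replicate n \<nu>) x = x"
  by (induction n) auto

lemma X_cont:
  fixes X :: "real \<Rightarrow> real^'l" and \<Lambda> :: "real \<Rightarrow> real^'m"
  assumes fixX: "\<And>s. f (X s, \<Lambda> s) = X s"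
    and conn: "connected (range (\<lambda>s. (s, X s)))"
    and spec: "\<And>s. spec_radius (Dx f (X s) (\<Lambda> s)) < 1"
    and \<Lambda>c: "\<And>s. isCont \<Lambda> s"
  shows "isCont X s0"
proof -
  define p where "p = X s0"
  define \<mu>0 where "\<mu>0 = \<Lambda> s0"
  have fp: "f (p, \<mu>0) = p" unfolding p_def \<mu>0_def by (rule fixX)
  obtain N where N: "N > 0" "norm (bpow (J (p, \<mu>0)) N) < 1/4"
    using bpow_decay[of "J (p, \<mu>0)"] spec[of s0] unfolding Dx_eq p_def \<mu>0_def by blast
  obtain \<delta> where \<delta>: "\<delta> > 0" and C: "\<And>\<nu>s x y. length \<nu>s = N \<Longrightarrow> (\<forall>\<nu>\<in>set \<nu>s. dist \<nu> \<mu>0 < \<delta>) \<Longrightarrow>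
      dist x p < \<delta> \<Longrightarrow> dist y p < \<delta> \<Longrightarrow> dist (itc \<nu>s x) (itc \<nu>s y) \<le> 1/2 * dist x y"
    using local_contr[OF fp N(2)] by blast
  have b: "dist x p \<le> 2 * dist (itc (replicate N \<nu>) p) p"
    if \<nu>: "dist \<nu> \<mu>0 < \<delta>" and x: "f (x, \<nu>) = x" "dist x p < \<delta>" for \<nu> x
  proof -
    have "dist x p \<le> dist (itc (replicate N \<nu>) x) (itc (replicate N \<nu>) p) + dist (itc (replicate N \<nu>) p) p"
      using itc_fixed[OF x(1), of N] dist_triangle by metis
    also have "\<dots> \<le> 1/2 * dist x p + dist (itc (replicate N \<nu>) p) p"
      using C[of "replicate N \<nu>" x p] \<nu> x(2) \<delta> by auto
    finally show ?thesis by linarith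
  qed
  have c: "\<exists>\<rho>>0. \<forall>s. \<bar>s - s0\<bar> < \<rho> \<longrightarrow> dist (\<Lambda> s) \<mu>0 < \<delta> \<and> dist (itc (replicate N (\<Lambda> s)) p) p < \<epsilon>"
    if \<epsilon>: "\<epsilon> > 0" for \<epsilon>
  proof -
    obtain \<delta>c where \<delta>c: "\<delta>c > 0" and Hc: "\<forall>\<nu>s x. length \<nu>s = N \<and> (\<forall>\<nu>\<in>set \<nu>s. dist \<nu> \<mu>0 < \<delta>c) \<and> dist x p < \<delta>c \<longrightarrow>
            dist (itc \<nu>s x) p < \<epsilon> \<and> norm (itcD \<nu>s x - bpow (J (p, \<mu>0)) N) < \<epsilon>"
      using cont_lemma[OF fp \<epsilon>, of N] by blast
    obtain \<rho> where \<rho>: "\<rho> > 0" and H\<rho>: "\<forall>s. dist s s0 < \<rho> \<longrightarrow> dist (\<Lambda> s) (\<Lambda> s0) < min \<delta> \<delta>c"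
      using \<Lambda>c[of s0] \<delta> \<delta>c unfolding continuous_at_eps_delta
      by (metis min_less_iff_conj)
    show ?thesis
    proof (intro exI[of _ \<rho>] conjI allI impI)
      fix s assume "\<bar>s - s0\<bar> < \<rho>"
      then have "dist (\<Lambda> s) \<mu>0 < min \<delta> \<delta>c" using H\<rho> unfolding \<mu>0_def by (simp add: dist_real_def)
      then show "dist (\<Lambda> s) \<mu>0 < \<delta>" "dist (itc (replicate N (\<Lambda> s)) p) p < \<epsilon>"
        using Hc \<delta>c by auto
    qed (rule \<rho>)
  qed
  obtain \<rho>0 where \<rho>0: "\<rho>0 > 0" and H0: "\<And>s. \<bar>s - s0\<bar> < \<rho>0 \<Longrightarrow> dist (\<Lambda> s) \<mu>0 < \<delta> \<and> dist (itc (replicate N (\<Lambda> s)) p) p < \<delta>/4"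
    using c[of "\<delta>/4"] \<delta> by auto
  have dich: "dist (X s) (X s0) < \<delta>/2 \<or> dist (X s) (X s0) \<ge> 2*(\<delta>/2)" if "\<bar>s - s0\<bar> < \<rho>0" for s
  proof (cases "dist (X s) p < \<delta>")
    case True
    then have "dist (X s) p \<le> 2 * dist (itc (replicate N (\<Lambda> s)) p) p"
      using b[of "\<Lambda> s" "X s"] H0[OF that] fixX by blast
    then show ?thesis using H0[OF that] unfolding p_def by auto
  next
    case False
    then show ?thesis unfolding p_def by auto
  qed
  have near: "dist (X s) p < \<delta>/2" if "\<bar>s - s0\<bar> < \<rho>0" for s
    using graph_conn_lemma[OF conn _ dich that] \<delta> unfolding p_def by auto
  show ?thesis unfolding continuous_at_eps_delta
  proof (intro allI impI)
    fix \<epsilon> :: real assume \<epsilon>: "\<epsilon> > 0"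
    obtain \<rho> where \<rho>: "\<rho> > 0" and H: "\<And>s. \<bar>s - s0\<bar> < \<rho> \<Longrightarrow> dist (\<Lambda> s) \<mu>0 < \<delta> \<and> dist (itc (replicate N (\<Lambda> s)) p) p < \<epsilon>/2"
      using c[of "\<epsilon>/2"] \<epsilon> by auto
    show "\<exists>d>0. \<forall>s. dist s s0 < d \<longrightarrow> dist (X s) (X s0) < \<epsilon>"
    proof (intro exI[of _ "min \<rho> \<rho>0"] conjI allI impI)
      show "min \<rho> \<rho>0 > 0" using \<rho> \<rho>0 by simp
      fix s assume "dist s s0 < min \<rho> \<rho>0"
      then have s1: "\<bar>s - s0\<bar> < \<rho>" and s2: "\<bar>s - s0\<bar> < \<rho>0" by (auto simp: dist_real_def)
      have "dist (X s) p \<le> 2 * dist (itc (replicate N (\<Lambda> s)) p) p"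
        using b[of "\<Lambda> s" "X s"] H[OF s1] fixX near[OF s2] \<delta> by auto
      then show "dist (X s) (X s0) < \<epsilon>" using H[OF s1] unfolding p_def by auto
    qed
  qed
qed


lemma isCont_bpowJ: "isCont (\<lambda>z. bpow (J z) n) z"
proof (induction n)
  case 0
  show ?case by simp
next
  case (Suc n)
  then show ?case
    by (simp, intro bounded_bilinear.continuous[OF bounded_bilinear_blinfun_compose] isCont_J)
qed

lemma unif_N:
  assumes K: "compact K" and spec: "\<And>q. q \<in> K \<Longrightarrow> spec_radius (Dx f (fst q) (snd q)) < 1"
  shows "\<exists>N>0. \<forall>q\<in>K. norm (bpow (J q) N) < 1/4"
proof -
  have "\<forall>q\<in>K. \<exists>n>0. norm (bpow (J q) n) < 1/4"
  proof
    fix q assume "q \<in> K"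
    then have "spec_radius (matrix (blinfun_apply (J (fst q, snd q)))) < 1" using spec[of q] unfolding Dx_eq by blast
    then show "\<exists>n>0. norm (bpow (J q) n) < 1/4" using bpow_decay by simp
  qed
  from bchoice[OF this] obtain Nq where Nq: "\<And>q. q \<in> K \<Longrightarrow> Nq q > 0 \<and> norm (bpow (J q) (Nq q)) < 1/4"
    by blast
  define U where "U q = {z. norm (bpow (J z) (Nq q)) < 1/4}" for q
  have oU: "open (U q)" for q unfolding U_def
    by (rule open_Collect_less) (auto intro!: continuous_intros continuous_at_imp_continuous_on isCont_bpowJ)
  have cov: "K \<subseteq> (\<Union>q\<in>K. U q)" using Nq unfolding U_def by blast
  obtain F where F: "F \<subseteq> K" "finite F" "K \<subseteq> (\<Union>q\<in>F. U q)"
    by (rule compactE_image[OF K oU cov])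
  define N where "N = (\<Prod>q\<in>F. Nq q)"
  have Npos: "N > 0" unfolding N_def using F Nq by (auto intro!: prod_pos)
  show ?thesis
  proof (intro exI[of _ N] conjI ballI)
    show "N > 0" by fact
    fix q' assume "q' \<in> K"
    then obtain q where q: "q \<in> F" "q' \<in> U q" using F by blast
    have "Nq q dvd N" unfolding N_def using q(1) F(2) by (simp add: dvd_prodI)
    then obtain m where m: "N = Nq q * m" by blast
    have "m > 0" using Npos m by (cases m) auto
    have x: "norm (bpow (J q') (Nq q)) < 1/4" using q(2) unfolding U_def by simp
    have "norm (bpow (J q') N) \<le> norm (bpow (J q') (Nq q)) ^ m" unfolding m by (rule norm_bpow_mult)
    also have "\<dots> \<le> norm (bpow (J q') (Nq q)) ^ 1"
      using x \<open>m > 0\<close> by (intro power_decreasing) auto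
    finally show "norm (bpow (J q') N) < 1/4" using x by simp
  qed
qed

lemma unif_contr:
  assumes K: "compact K" and fixK: "\<And>q. q \<in> K \<Longrightarrow> f q = fst q"
    and NK: "\<And>q. q \<in> K \<Longrightarrow> norm (bpow (J q) N) < 1/4"
  shows "\<exists>\<delta>>0. \<forall>q\<in>K. \<forall>\<nu>s. length \<nu>s = N \<and> (\<forall>\<nu>\<in>set \<nu>s. dist \<nu> (snd q) < \<delta>) \<longrightarrow>
           (\<forall>x y. dist x (fst q) < \<delta> \<and> dist y (fst q) < \<delta> \<longrightarrow> dist (itc \<nu>s x) (itc \<nu>s y) \<le> 1/2 * dist x y)"
proof -
  have "\<forall>q\<in>K. \<exists>\<delta>>0. \<forall>\<nu>s. length \<nu>s = N \<and> (\<forall>\<nu>\<in>set \<nu>s. dist \<nu> (snd q) < \<delta>) \<longrightarrow>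
           (\<forall>x y. dist x (fst q) < \<delta> \<and> dist y (fst q) < \<delta> \<longrightarrow> dist (itc \<nu>s x) (itc \<nu>s y) \<le> 1/2 * dist x y)"
  proof
    fix q assume q: "q \<in> K"
    have "f (fst q, snd q) = fst q" using fixK[OF q] by simp
    moreover have "norm (bpow (J (fst q, snd q)) N) < 1/4" using NK[OF q] by simp
    ultimately show "\<exists>\<delta>>0. \<forall>\<nu>s. length \<nu>s = N \<and> (\<forall>\<nu>\<in>set \<nu>s. dist \<nu> (snd q) < \<delta>) \<longrightarrow>
           (\<forall>x y. dist x (fst q) < \<delta> \<and> dist y (fst q) < \<delta> \<longrightarrow> dist (itc \<nu>s x) (itc \<nu>s y) \<le> 1/2 * dist x y)"
      by (rule local_contr)
  qed
  from bchoice[OF this] obtain d where d: "\<And>q. q \<in> K \<Longrightarrow> d q > 0 \<and> (\<forall>\<nu>s. length \<nu>s = N \<and> (\<forall>\<nu>\<in>set \<nu>s. dist \<nu> (snd q) < d q) \<longrightarrow>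
           (\<forall>x y. dist x (fst q) < d q \<and> dist y (fst q) < d q \<longrightarrow> dist (itc \<nu>s x) (itc \<nu>s y) \<le> 1/2 * dist x y))"
    by blast
  obtain e where e: "e > 0" and L: "\<forall>q'\<in>K. \<exists>q\<in>K. (\<forall>x. dist x (fst q') < e \<longrightarrow> dist x (fst q) < d q) \<and>
                                 (\<forall>\<nu>. dist \<nu> (snd q') < e \<longrightarrow> dist \<nu> (snd q) < d q)"
    using lebesgue_box[OF K, of d] d by blast
  show ?thesis
  proof (intro exI[of _ e] conjI ballI allI impI)
    show "e > 0" by fact
    fix q' \<nu>s x y
    assume q': "q' \<in> K" and a: "length \<nu>s = N \<and> (\<forall>\<nu>\<in>set \<nu>s. dist \<nu> (snd q') < e)"
      and b: "dist x (fst q') < e \<and> dist y (fst q') < e"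
    obtain q where q: "q \<in> K" and L1: "\<And>x. dist x (fst q') < e \<Longrightarrow> dist x (fst q) < d q"
      and L2: "\<And>\<nu>. dist \<nu> (snd q') < e \<Longrightarrow> dist \<nu> (snd q) < d q"
      using L q' by blast
    show "dist (itc \<nu>s x) (itc \<nu>s y) \<le> 1/2 * dist x y"
      using d[OF q] a b L1 L2 by blast
  qed
qed

lemma unif_near:
  assumes K: "compact K" and fixK: "\<And>q. q \<in> K \<Longrightarrow> f q = fst q" and \<epsilon>: "\<epsilon> > 0"
  shows "\<exists>\<delta>>0. \<forall>q\<in>K. \<forall>\<nu>s. length \<nu>s = n \<and> (\<forall>\<nu>\<in>set \<nu>s. dist \<nu> (snd q) < \<delta>) \<longrightarrow>
           dist (itc \<nu>s (fst q)) (fst q) < \<epsilon>"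
proof -
  have "\<forall>q\<in>K. \<exists>\<delta>>0. \<forall>\<nu>s x. length \<nu>s = n \<and> (\<forall>\<nu>\<in>set \<nu>s. dist \<nu> (snd q) < \<delta>) \<and> dist x (fst q) < \<delta> \<longrightarrow>
            dist (itc \<nu>s x) (fst q) < \<epsilon>/2"
  proof
    fix q assume q: "q \<in> K"
    have fq: "f (fst q, snd q) = fst q" using fixK[OF q] by simp
    show "\<exists>\<delta>>0. \<forall>\<nu>s x. length \<nu>s = n \<and> (\<forall>\<nu>\<in>set \<nu>s. dist \<nu> (snd q) < \<delta>) \<and> dist x (fst q) < \<delta> \<longrightarrow>
            dist (itc \<nu>s x) (fst q) < \<epsilon>/2"
    proof -
      have "\<epsilon>/2 > 0" using \<epsilon> by simp
      from cont_lemma[OF fq this, of n] show ?thesis by blast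
    qed
  qed
  from bchoice[OF this] obtain d0 where d0: "\<And>q. q \<in> K \<Longrightarrow> d0 q > 0 \<and> (\<forall>\<nu>s x. length \<nu>s = n \<and> (\<forall>\<nu>\<in>set \<nu>s. dist \<nu> (snd q) < d0 q) \<and> dist x (fst q) < d0 q \<longrightarrow>
            dist (itc \<nu>s x) (fst q) < \<epsilon>/2)"
    by blast
  define d where "d q = min (d0 q) (\<epsilon>/2)" for q
  have dpos: "\<And>q. q \<in> K \<Longrightarrow> d q > 0" using d0 \<epsilon> by (simp add: d_def)
  obtain e where e: "e > 0" and L: "\<forall>q'\<in>K. \<exists>q\<in>K. (\<forall>x. dist x (fst q') < e \<longrightarrow> dist x (fst q) < d q) \<and>
                                 (\<forall>\<nu>. dist \<nu> (snd q') < e \<longrightarrow> dist \<nu> (snd q) < d q)"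
    using lebesgue_box[OF K, of d] dpos by blast
  show ?thesis
  proof (intro exI[of _ e] conjI ballI allI impI)
    show "e > 0" by fact
    fix q' \<nu>s
    assume q': "q' \<in> K" and a: "length \<nu>s = n \<and> (\<forall>\<nu>\<in>set \<nu>s. dist \<nu> (snd q') < e)"
    obtain q where q: "q \<in> K" and L1: "\<And>x. dist x (fst q') < e \<Longrightarrow> dist x (fst q) < d q"
      and L2: "\<And>\<nu>. dist \<nu> (snd q') < e \<Longrightarrow> dist \<nu> (snd q) < d q"
      using L q' by blast
    have x: "dist (fst q') (fst q) < d q" using L1[of "fst q'"] e by simp
    have "\<forall>\<nu>\<in>set \<nu>s. dist \<nu> (snd q) < d0 q" using a L2 unfolding d_def by fastforce
    then have "dist (itc \<nu>s (fst q')) (fst q) < \<epsilon>/2" using d0[OF q] a x unfolding d_def by auto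
    moreover have "dist (fst q') (fst q) < \<epsilon>/2" using x unfolding d_def by simp
    ultimately show "dist (itc \<nu>s (fst q')) (fst q') < \<epsilon>"
      using dist_triangle[of "itc \<nu>s (fst q')" "fst q'" "fst q"] dist_commute[of "fst q" "fst q'"] by linarith
  qed
qed


lemma iter_x:
  assumes rec: "\<And>n. x (n + 1) = f (x n, \<Lambda> (r * of_int n))"
  shows "x (m + int k) = itc (map (\<lambda>i. \<Lambda> (r * of_int (m + int i))) [0..<k]) (x m)"
proof (induction k)
  case 0
  then show ?case by simp
next
  case (Suc k)
  have e: "m + int (Suc k) = (m + int k) + 1" by simp
  have "x (m + int (Suc k)) = f (x (m + int k), \<Lambda> (r * of_int (m + int k)))"
    unfolding e by (rule rec)
  then show ?case using Suc by (simp add: itc_append)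
qed

end



context sys begin

lemma main_track:
  fixes X :: "real \<Rightarrow> real^'l" and \<Lambda> :: "real \<Rightarrow> real^'m" and Xm Xp :: "real^'l" and lm lp :: "real^'m"
  assumes fixX: "\<And>s. f (X s, \<Lambda> s) = X s" and fm: "f (Xm, lm) = Xm" and fpp: "f (Xp, lp) = Xp"
    and Xc: "\<And>s. isCont X s" and \<Lambda>c: "\<And>s. isCont \<Lambda> s"
    and Xlm: "(X \<longlongrightarrow> Xm) at_bot" and Xlp: "(X \<longlongrightarrow> Xp) at_top"
    and Llm: "(\<Lambda> \<longlongrightarrow> lm) at_bot" and Llp: "(\<Lambda> \<longlongrightarrow> lp) at_top"
    and spec: "\<And>s. spec_radius (Dx f (X s) (\<Lambda> s)) < 1"
    and specm: "spec_radius (Dx f Xm lm) < 1" and specp: "spec_radius (Dx f Xp lp) < 1"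
  shows "\<exists>r0>0. \<forall>r. 0 < r \<and> r < r0 \<longrightarrow>
           (\<forall>x :: int \<Rightarrow> real^'l.
              (\<forall>n. x (n + 1) = f (x n, \<Lambda> (r * of_int n))) \<and> (x \<longlongrightarrow> Xm) at_bot
              \<longrightarrow> (x \<longlongrightarrow> Xp) at_top)"
proof -
  define Y where "Y s = (X s, \<Lambda> s)" for s
  have Yc: "isCont Y s" for s unfolding Y_def by (intro continuous_intros Xc \<Lambda>c)
  have Ylm: "(Y \<longlongrightarrow> (Xm, lm)) at_bot" unfolding Y_def by (intro tendsto_Pair Xlm Llm)
  have Ylp: "(Y \<longlongrightarrow> (Xp, lp)) at_top" unfolding Y_def by (intro tendsto_Pair Xlp Llp)
  define K where "K = range Y \<union> {(Xm, lm), (Xp, lp)}"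
  have K: "compact K" unfolding K_def by (rule compactify(1)[OF Yc Ylm Ylp])
  have UC: "\<exists>d>0. \<forall>s t. \<bar>s - t\<bar> < d \<longrightarrow> dist (Y s) (Y t) < \<epsilon>" if "\<epsilon> > 0" for \<epsilon>
    by (rule compactify(2)[OF Yc Ylm Ylp that])
  have YK: "Y s \<in> K" for s unfolding K_def by simp
  have fixK: "f q = fst q" if "q \<in> K" for q using that fixX fm fpp unfolding K_def Y_def by auto
  have specK: "spec_radius (Dx f (fst q) (snd q)) < 1" if "q \<in> K" for q
    using that spec specm specp unfolding K_def Y_def by auto
  obtain N where N0: "N > 0" and N: "\<And>q. q \<in> K \<Longrightarrow> norm (bpow (J q) N) < 1/4"
    using unif_N[OF K specK] by blast
  obtain \<delta> where \<delta>: "\<delta> > 0" and CT: "\<forall>q\<in>K. \<forall>\<nu>s. length \<nu>s = N \<and> (\<forall>\<nu>\<in>set \<nu>s. dist \<nu> (snd q) < \<delta>) \<longrightarrow>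
           (\<forall>x y. dist x (fst q) < \<delta> \<and> dist y (fst q) < \<delta> \<longrightarrow> dist (itc \<nu>s x) (itc \<nu>s y) \<le> 1/2 * dist x y)"
    using unif_contr[OF K fixK N] by blast
  have "\<delta>/8 > 0" using \<delta> by simp
  from unif_near[OF K fixK this, of N] obtain d1 where d1: "d1 > 0" and
    NR: "\<forall>q\<in>K. \<forall>\<nu>s. length \<nu>s = N \<and> (\<forall>\<nu>\<in>set \<nu>s. dist \<nu> (snd q) < d1) \<longrightarrow>
           dist (itc \<nu>s (fst q)) (fst q) < \<delta>/8" by blast
  have "min (min \<delta> d1) (\<delta>/8) > 0" using \<delta> d1 by simp
  from UC[OF this] obtain \<eta> where \<eta>: "\<eta> > 0" and
    H\<eta>: "\<forall>s t. \<bar>s - t\<bar> < \<eta> \<longrightarrow> dist (Y s) (Y t) < min (min \<delta> d1) (\<delta>/8)" by blast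
  have HX: "dist (X s) (X t) < \<delta>/8" if "\<bar>s - t\<bar> < \<eta>" for s t
    using H\<eta> that dist_fst_le[of "Y s" "Y t"] unfolding Y_def by fastforce
  have HL: "dist (\<Lambda> s) (\<Lambda> t) < min \<delta> d1" if "\<bar>s - t\<bar> < \<eta>" for s t
    using H\<eta> that dist_snd_le[of "Y s" "Y t"] unfolding Y_def by fastforce
  define r0 where "r0 = \<eta> / real N"
  show ?thesis
  proof (intro exI[of _ r0] conjI allI impI)
    show "r0 > 0" unfolding r0_def using \<eta> N0 by simp
    fix r :: real and x :: "int \<Rightarrow> real^'l"
    assume r: "0 < r \<and> r < r0"
      and xa: "(\<forall>n. x (n + 1) = f (x n, \<Lambda> (r * of_int n))) \<and> (x \<longlongrightarrow> Xm) at_bot"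
    have rpos: "r > 0" using r by simp
    have rec: "\<And>n. x (n + 1) = f (x n, \<Lambda> (r * of_int n))" using xa by blast
    have xlm: "(x \<longlongrightarrow> Xm) at_bot" using xa by blast
    have rN: "r * real N < \<eta>" using r N0 unfolding r0_def by (simp add: field_simps)
    define P where "P m k = map (\<lambda>i. \<Lambda> (r * of_int (m + int i))) [0..<k]" for m k
    have lenP: "length (P m k) = k" for m k unfolding P_def by simp
    have xit: "x (m + int k) = itc (P m k) (x m)" for m k unfolding P_def by (rule iter_x[OF rec])
    have Pclose: "\<forall>\<nu>\<in>set (P m N). dist \<nu> (\<Lambda> (r * of_int m)) < min \<delta> d1" for m
    proof
      fix \<nu> assume "\<nu> \<in> set (P m N)"
      then obtain i where i: "i < N" "\<nu> = \<Lambda> (r * of_int (m + int i))" unfolding P_def by auto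
      have "\<bar>r * of_int (m + int i) - r * of_int m\<bar> = r * real i" using rpos by (simp add: algebra_simps)
      also have "\<dots> < \<eta>" using rN i(1) rpos
        by (meson less_trans mult_strict_left_mono of_nat_less_iff le_less_trans order.refl)
      finally show "dist \<nu> (\<Lambda> (r * of_int m)) < min \<delta> d1" using HL i(2) by blast
    qed
    have BE: "dist (x (m + int N)) (X (r * of_int (m + int N))) \<le> 1/2 * dist (x m) (X (r * of_int m))
               + dist (itc (P m N) (X (r * of_int m))) (X (r * of_int m)) + dist (X (r * of_int m)) (X (r * of_int (m + int N)))"
      if "dist (x m) (X (r * of_int m)) < \<delta>" for m
    proof -
      let ?s = "r * of_int m"
      have q: "Y ?s \<in> K" by (rule YK)
      have c1: "dist (itc (P m N) (x m)) (itc (P m N) (X ?s)) \<le> 1/2 * dist (x m) (X ?s)"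
        using CT q Pclose[of m] that \<delta> lenP[of m N] unfolding Y_def by simp
      have "dist (x (m + int N)) (X (r * of_int (m + int N))) \<le>
            dist (itc (P m N) (x m)) (itc (P m N) (X ?s)) + dist (itc (P m N) (X ?s)) (X (r * of_int (m + int N)))"
        unfolding xit by (rule dist_triangle)
      also have "\<dots> \<le> dist (itc (P m N) (x m)) (itc (P m N) (X ?s)) + (dist (itc (P m N) (X ?s)) (X ?s) + dist (X ?s) (X (r * of_int (m + int N))))"
        by (intro add_left_mono dist_triangle)
      finally show ?thesis using c1 by linarith
    qed
    have c2: "dist (itc (P m N) (X (r * of_int m))) (X (r * of_int m)) < \<delta>/8" for m
    proof -
      have a: "\<forall>\<nu>\<in>set (P m N). dist \<nu> (snd (Y (r * of_int m))) < d1" using Pclose[of m] unfolding Y_def by auto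
      have "dist (itc (P m N) (fst (Y (r * of_int m)))) (fst (Y (r * of_int m))) < \<delta>/8"
        using NR YK[of "r * of_int m"] a lenP[of m N] by blast
      then show ?thesis unfolding Y_def by simp
    qed
    have c3: "dist (X (r * of_int m)) (X (r * of_int (m + int N))) < \<delta>/8" for m
    proof -
      have "\<bar>r * of_int m - r * of_int (m + int N)\<bar> = r * real N" using rpos by (simp add: algebra_simps)
      then show ?thesis using HX rN by simp
    qed
    obtain m0 where m0: "dist (x m0) (X (r * of_int m0)) < \<delta>/2"
    proof -
      have "eventually (\<lambda>n. dist (x n) Xm < \<delta>/4) at_bot" using tendstoD[OF xlm, of "\<delta>/4"] \<delta> by simp
      then obtain N1 where N1: "\<And>n. n \<le> N1 \<Longrightarrow> dist (x n) Xm < \<delta>/4" unfolding eventually_at_bot_linorder by blast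
      have "eventually (\<lambda>s. dist (X s) Xm < \<delta>/4) at_bot" using tendstoD[OF Xlm, of "\<delta>/4"] \<delta> by simp
      then obtain S where S: "\<And>s. s \<le> S \<Longrightarrow> dist (X s) Xm < \<delta>/4" unfolding eventually_at_bot_linorder by blast
      define m where "m = min N1 (floor (S / r))"
      have "real_of_int m \<le> real_of_int (floor (S / r))" unfolding m_def by simp
      also have "\<dots> \<le> S / r" by (rule of_int_floor_le)
      finally have "of_int m \<le> S / r" .
      then have "r * of_int m \<le> S" using rpos by (simp add: field_simps)
      then have a: "dist (X (r * of_int m)) Xm < \<delta>/4" by (rule S)
      have b: "dist (x m) Xm < \<delta>/4" by (rule N1) (simp add: m_def)
      have "dist (x m) (X (r * of_int m)) < \<delta>/2"
        using dist_triangle[of "x m" "X (r * of_int m)" Xm] a b by (simp add: dist_commute)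
      then show ?thesis by (rule that)
    qed
    define mj where "mj j = m0 + int (j * N)" for j
    define D where "D j = dist (x (mj j)) (X (r * of_int (mj j)))" for j
    have mjS: "mj (Suc j) = mj j + int N" for j unfolding mj_def by simp
    have Dlt: "D j < \<delta>/2" for j
    proof (induction j)
      case 0
      show ?case using m0 unfolding D_def mj_def by simp
    next
      case (Suc j)
      have "D j < \<delta>" using Suc \<delta> by simp
      then have "D (Suc j) \<le> 1/2 * D j + dist (itc (P (mj j) N) (X (r * of_int (mj j)))) (X (r * of_int (mj j)))
               + dist (X (r * of_int (mj j))) (X (r * of_int (mj j + int N)))"
        using BE[of "mj j"] unfolding D_def mjS by simp
      then show ?case using Suc c2[of "mj j"] c3[of "mj j"] by linarith
    qed
    define e where "e j = dist (itc (P (mj j) N) (X (r * of_int (mj j)))) (X (r * of_int (mj j)))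
                        + dist (X (r * of_int (mj j))) (X (r * of_int (mj (Suc j))))" for j
    have Drec: "D (Suc j) \<le> 1/2 * D j + e j" for j
    proof -
      have "D j < \<delta>" using Dlt[of j] \<delta> by simp
      then show ?thesis using BE[of "mj j"] unfolding D_def e_def mjS by simp
    qed
    have big: "\<exists>J. \<forall>j\<ge>J. r * of_int (mj j) \<ge> T" for T
    proof -
      define J where "J = nat (ceiling (T / r - of_int m0))"
      show ?thesis
      proof (intro exI[of _ J] allI impI)
        fix j assume j: "j \<ge> J"
        have "real J \<ge> T / r - of_int m0" unfolding J_def by (rule real_nat_ceiling_ge)
        moreover have "j * N \<ge> j" using N0 by simp
        then have "real (j * N) \<ge> real J" using j by linarith
        ultimately have "of_int (mj j) \<ge> T / r" unfolding mj_def by simp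
        then show "r * of_int (mj j) \<ge> T" using rpos by (simp add: field_simps)
      qed
    qed
    have shift: "r * of_int (m + int i) = r * of_int m + r * real i" for m i by (simp add: algebra_simps)
    have econv: "\<exists>J. \<forall>j\<ge>J. e j < \<epsilon>" if \<epsilon>: "\<epsilon> > 0" for \<epsilon>
    proof -
      have "\<epsilon>/2 > 0" using \<epsilon> by simp
      from unif_near[OF K fixK this, of N] obtain d' where d': "d' > 0" and
        NR': "\<forall>q\<in>K. \<forall>\<nu>s. length \<nu>s = N \<and> (\<forall>\<nu>\<in>set \<nu>s. dist \<nu> (snd q) < d') \<longrightarrow>
           dist (itc \<nu>s (fst q)) (fst q) < \<epsilon>/2" by blast
      have "eventually (\<lambda>t. dist (\<Lambda> t) lp < d'/2) at_top" using tendstoD[OF Llp, of "d'/2"] d' by simp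
      moreover have "eventually (\<lambda>t. dist (X t) Xp < \<epsilon>/4) at_top" using tendstoD[OF Xlp, of "\<epsilon>/4"] \<epsilon> by simp
      ultimately have "eventually (\<lambda>t. dist (\<Lambda> t) lp < d'/2 \<and> dist (X t) Xp < \<epsilon>/4) at_top"
        by (rule eventually_conj)
      then obtain T where T: "\<And>t. t \<ge> T \<Longrightarrow> dist (\<Lambda> t) lp < d'/2 \<and> dist (X t) Xp < \<epsilon>/4"
        unfolding eventually_at_top_linorder by blast
      obtain J where J: "\<And>j. j \<ge> J \<Longrightarrow> r * of_int (mj j) \<ge> T" using big by blast
      show ?thesis
      proof (intro exI[of _ J] allI impI)
        fix j assume j: "j \<ge> J"
        let ?s = "r * of_int (mj j)"
        have ge: "r * of_int (mj j + int i) \<ge> T" for i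
          using J[OF j] rpos unfolding shift by (simp add: add_increasing2)
        have L0: "dist (\<Lambda> ?s) lp < d'/2" using T J[OF j] by blast
        have pc: "\<forall>\<nu>\<in>set (P (mj j) N). dist \<nu> (snd (Y ?s)) < d'"
        proof
          fix \<nu> assume "\<nu> \<in> set (P (mj j) N)"
          then obtain i where i: "\<nu> = \<Lambda> (r * of_int (mj j + int i))" unfolding P_def by auto
          have "dist \<nu> lp < d'/2" using T ge[of i] i by blast
          then show "dist \<nu> (snd (Y ?s)) < d'" using L0 dist_triangle_half_l[of \<nu> lp d' "\<Lambda> ?s"] unfolding Y_def
            by simp
        qed
        have "dist (itc (P (mj j) N) (fst (Y ?s))) (fst (Y ?s)) < \<epsilon>/2"
          using NR' YK[of ?s] pc lenP[of "mj j" N] by blast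
        then have t1: "dist (itc (P (mj j) N) (X ?s)) (X ?s) < \<epsilon>/2" unfolding Y_def by simp
        have a1: "dist (X ?s) Xp < \<epsilon>/4" using T J[OF j] by blast
        have a2: "dist (X (r * of_int (mj (Suc j)))) Xp < \<epsilon>/4" using T ge[of N] unfolding mjS by blast
        have t2: "dist (X ?s) (X (r * of_int (mj (Suc j)))) < \<epsilon>/2"
          using dist_triangle[of "X ?s" "X (r * of_int (mj (Suc j)))" Xp] a1 a2 by (simp add: dist_commute)
        show "e j < \<epsilon>" unfolding e_def using t1 t2 by linarith
      qed
    qed
    have Dconv: "D \<longlonglongrightarrow> 0"
      by (rule seq_lemma[of D "\<delta>/2" e]) (use Dlt Drec econv in \<open>auto simp: D_def less_imp_le\<close>)
    have xconv: "\<exists>J. \<forall>j\<ge>J. dist (x (mj j)) Xp < \<epsilon>" if \<epsilon>: "\<epsilon> > 0" for \<epsilon>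
    proof -
      have "\<epsilon>/2 > 0" using \<epsilon> by simp
      from LIMSEQ_D[OF Dconv this] obtain J1 where J1: "\<And>j. j \<ge> J1 \<Longrightarrow> norm (D j - 0) < \<epsilon>/2" by blast
      have "eventually (\<lambda>t. dist (X t) Xp < \<epsilon>/2) at_top" using tendstoD[OF Xlp, of "\<epsilon>/2"] \<epsilon> by simp
      then obtain T where T: "\<And>t. t \<ge> T \<Longrightarrow> dist (X t) Xp < \<epsilon>/2" unfolding eventually_at_top_linorder by blast
      obtain J2 where J2: "\<And>j. j \<ge> J2 \<Longrightarrow> r * of_int (mj j) \<ge> T" using big by blast
      show ?thesis
      proof (intro exI[of _ "max J1 J2"] allI impI)
        fix j assume j: "j \<ge> max J1 J2"
        have "\<bar>D j\<bar> < \<epsilon>/2" using J1[of j] j by simp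
        then have "D j < \<epsilon>/2" by linarith
        moreover have "dist (X (r * of_int (mj j))) Xp < \<epsilon>/2" using J2[of j] T j by simp
        ultimately have "D j < \<epsilon>/2" "dist (X (r * of_int (mj j))) Xp < \<epsilon>/2" by auto
        then show "dist (x (mj j)) Xp < \<epsilon>" unfolding D_def
          using dist_triangle[of "x (mj j)" Xp "X (r * of_int (mj j))"] by linarith
      qed
    qed
    show "(x \<longlongrightarrow> Xp) at_top"
    proof (rule tendstoI)
      fix \<epsilon> :: real assume \<epsilon>: "\<epsilon> > 0"
      have "\<forall>k\<in>{..<N}. eventually (\<lambda>j. dist (x (mj j + int k)) Xp < \<epsilon>) sequentially"
      proof
        fix k assume "k \<in> {..<N}"
        obtain \<delta>k where \<delta>k: "\<delta>k > 0" and Hk: "\<forall>\<nu>s y. length \<nu>s = k \<and> (\<forall>\<nu>\<in>set \<nu>s. dist \<nu> lp < \<delta>k) \<and> dist y Xp < \<delta>k \<longrightarrow>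
            dist (itc \<nu>s y) Xp < \<epsilon> \<and> norm (itcD \<nu>s y - bpow (J (Xp, lp)) k) < \<epsilon>"
          using cont_lemma[OF fpp \<epsilon>, of k] by blast
        obtain J1 where J1: "\<forall>j\<ge>J1. dist (x (mj j)) Xp < \<delta>k" using xconv[OF \<delta>k] by blast
        have "eventually (\<lambda>t. dist (\<Lambda> t) lp < \<delta>k) at_top" using tendstoD[OF Llp, of "\<delta>k"] \<delta>k by simp
        then obtain T where T: "\<And>t. t \<ge> T \<Longrightarrow> dist (\<Lambda> t) lp < \<delta>k" unfolding eventually_at_top_linorder by blast
        obtain J2 where J2: "\<And>j. j \<ge> J2 \<Longrightarrow> r * of_int (mj j) \<ge> T" using big by blast
        show "eventually (\<lambda>j. dist (x (mj j + int k)) Xp < \<epsilon>) sequentially"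
          unfolding eventually_sequentially
        proof (intro exI[of _ "max J1 J2"] allI impI)
          fix j assume j: "j \<ge> max J1 J2"
          have pc: "\<forall>\<nu>\<in>set (P (mj j) k). dist \<nu> lp < \<delta>k"
          proof
            fix \<nu> assume "\<nu> \<in> set (P (mj j) k)"
            then obtain i where i: "\<nu> = \<Lambda> (r * of_int (mj j + int i))" unfolding P_def by auto
            have "r * of_int (mj j + int i) \<ge> T"
              using J2[of j] j rpos unfolding shift by (simp add: add_increasing2)
            then show "dist \<nu> lp < \<delta>k" using T i by blast
          qed
          have "dist (itc (P (mj j) k) (x (mj j))) Xp < \<epsilon>" using Hk pc lenP J1 j by auto
          then show "dist (x (mj j + int k)) Xp < \<epsilon>" unfolding xit .
        qed
      qed
      then have "eventually (\<lambda>j. \<forall>k\<in>{..<N}. dist (x (mj j + int k)) Xp < \<epsilon>) sequentially"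
        by (rule eventually_ball_finite[OF finite_lessThan])
      then obtain J where J: "\<And>j k. j \<ge> J \<Longrightarrow> k < N \<Longrightarrow> dist (x (mj j + int k)) Xp < \<epsilon>"
        unfolding eventually_sequentially by blast
      show "eventually (\<lambda>n. dist (x n) Xp < \<epsilon>) at_top"
        unfolding eventually_at_top_linorder
      proof (intro exI[of _ "mj J"] allI impI)
        fix n assume n: "n \<ge> mj J"
        define j where "j = nat ((n - m0) div int N)"
        define k where "k = nat ((n - m0) mod int N)"
        have Npos: "int N > 0" using N0 by simp
        have nm: "n - m0 \<ge> int (J * N)" using n unfolding mj_def by simp
        then have nn: "n - m0 \<ge> 0" by linarith
        have dnn: "(n - m0) div int N \<ge> 0" using nn Npos by (simp add: pos_imp_zdiv_nonneg_iff)
        have mnn: "(n - m0) mod int N \<ge> 0" "(n - m0) mod int N < int N" using Npos by simp_all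
        have "int (j * N) + int k = (n - m0) div int N * int N + (n - m0) mod int N"
          unfolding j_def k_def using dnn mnn by simp
        also have "\<dots> = n - m0" by (rule div_mult_mod_eq)
        finally have decomp: "n = mj j + int k" unfolding mj_def by simp
        have kN: "k < N" unfolding k_def using mnn by simp
        have "int (J * N) div int N \<le> (n - m0) div int N" using nm Npos by (rule zdiv_mono1)
        then have "int J \<le> (n - m0) div int N" using Npos by simp
        then have jJ: "j \<ge> J" unfolding j_def by simp
        show "dist (x n) Xp < \<epsilon>" using J[OF jJ kN] decomp by simp
      qed
    qed
  qed
qed

end



theorem mainTheorem4:
  fixes f :: "(real^'l) \<times> (real^'m) \<Rightarrow> real^'l"
    and \<Lambda> :: "real \<Rightarrow> real^'m" and lm lp :: "real^'m"
    and X :: "real \<Rightarrow> real^'l" and Xm Xp :: "real^'l"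
  assumes "C1_map f"
    and "parameter_shift \<Lambda> lm lp"
    and "stable_path f \<Lambda> lm lp X Xm Xp"
  shows "\<exists>r0>0. \<forall>r. 0 < r \<and> r < r0 \<longrightarrow>
           (\<forall>x :: int \<Rightarrow> real^'l.
              (\<forall>n. x (n + 1) = f (x n, \<Lambda> (r * of_int n))) \<and> (x \<longlongrightarrow> Xm) at_bot
              \<longrightarrow> (x \<longlongrightarrow> Xp) at_top)"
proof -
  from assms(1) obtain f' where fd: "\<And>z. (f has_derivative blinfun_apply (f' z)) (at z)"
    and fc: "continuous_on UNIV f'" unfolding C1_map_def by blast
  interpret sys f f' by unfold_locales (use fd fc in auto)
  from assms(2) obtain \<Lambda>' where Ld: "\<And>s. (\<Lambda> has_vector_derivative \<Lambda>' s) (at s)"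
    and Llm: "(\<Lambda> \<longlongrightarrow> lm) at_bot" and Llp: "(\<Lambda> \<longlongrightarrow> lp) at_top"
    unfolding parameter_shift_def by blast
  have \<Lambda>c: "isCont \<Lambda> s" for s using Ld[of s] by (rule has_vector_derivative_continuous)
  from assms(3) have fixX: "\<And>s. f (X s, \<Lambda> s) = X s"
    and conn: "connected (range (\<lambda>s. (s, X s)))"
    and Xlm: "(X \<longlongrightarrow> Xm) at_bot" and Xlp: "(X \<longlongrightarrow> Xp) at_top"
    and fm: "f (Xm, lm) = Xm" and fpp: "f (Xp, lp) = Xp"
    and spec: "\<And>s. spec_radius (Dx f (X s) (\<Lambda> s)) < 1"
    and specm: "spec_radius (Dx f Xm lm) < 1" and specp: "spec_radius (Dx f Xp lp) < 1"
    unfolding stable_path_def by blast+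
  have Xc: "isCont X s" for s by (rule X_cont[OF fixX conn spec \<Lambda>c])
  show ?thesis
    by (rule main_track[OF fixX fm fpp Xc \<Lambda>c Xlm Xlp Llm Llp spec specm specp])
qed


end
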